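(* Let $M_{1/2} := \mathbb{N}_0[\frac12]$ and let $P(x)$ be a nonzero element of the monoid algebra $\mathbb{Q}[M_{1/2}]$. The following are equivalent: (a) $P(x)$ has only finitely many divisors in $\mathbb{Q}[M_{1/2}]$ up to associates; (b) $P(x)$ satisfies the ACCP, i.e., every ascending chain of principal ideals of $\mathbb{Q}[M_{1/2}]$ starting at $P(x)\mathbb{Q}[M_{1/2}]$ stabilizes; (c) $P(x)$ is atomic, i.e., it is a unit or a finite product of irreducible elements of $\mathbb{Q}[M_{1/2}]$.
   Context: $\mathbb{Q}[M_{1/2}]$ is the integral domain of polynomial expressions $\sum c_i x^{m_i}$ with $c_i \in \mathbb{Q}$ and $m_i$ nonnegative dyadic rationals. *)

theory Defs
  imports Complex_Main "HOL-Library.Poly_Mapping"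
begin

definition dyadics :: "rat set" where
  "dyadics = {q. 0 \<le> q \<and> (\<exists>n::nat. q * 2 ^ n \<in> \<int>)}"

typedef dyadic = dyadics
  morphisms rep_dyadic Abs_dyadic
  unfolding dyadics_def by (rule exI[of _ 0]) auto

setup_lifting type_definition_dyadic

lemma dyadics_add:
  assumes "q \<in> dyadics" "r \<in> dyadics" shows "q + r \<in> dyadics"
proof -
  from assms obtain n m where n: "q * 2 ^ n \<in> \<int>" and m: "r * 2 ^ m \<in> \<int>"
    and nn: "0 \<le> q" "0 \<le> r" unfolding dyadics_def by auto
  have "(q * 2 ^ n) * 2 ^ m \<in> \<int>" "(r * 2 ^ m) * 2 ^ n \<in> \<int>"
    using n m by (auto intro: Ints_mult)
  hence "(q + r) * 2 ^ (n + m) \<in> \<int>"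
    by (simp add: algebra_simps power_add Ints_add)
  thus ?thesis using nn unfolding dyadics_def by auto
qed

instantiation dyadic :: comm_monoid_add
begin
lift_definition zero_dyadic :: dyadic is 0 unfolding dyadics_def by (auto intro: exI[of _ 0])
lift_definition plus_dyadic :: "dyadic \<Rightarrow> dyadic \<Rightarrow> dyadic" is "(+)" by (rule dyadics_add)
instance proof
  fix a b c :: dyadic
  show "a + b + c = a + (b + c)" by transfer simp
  show "a + b = b + a" by transfer simp
  show "0 + a = a" by transfer simp
qed
end

instantiation dyadic :: linorder
begin
lift_definition less_eq_dyadic :: "dyadic \<Rightarrow> dyadic \<Rightarrow> bool" is "(\<le>)" .
lift_definition less_dyadic :: "dyadic \<Rightarrow> dyadic \<Rightarrow> bool" is "(<)" .
instance proof
  fix x y z :: dyadic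
  show "(x < y) = (x \<le> y \<and> \<not> y \<le> x)" by transfer auto
  show "x \<le> x" by transfer simp
  show "x \<le> y \<Longrightarrow> y \<le> z \<Longrightarrow> x \<le> z" by transfer simp
  show "x \<le> y \<Longrightarrow> y \<le> x \<Longrightarrow> x = y" by transfer simp
  show "x \<le> y \<or> y \<le> x" by transfer auto
qed
end

lemma dyadics_diff:
  assumes "q \<in> dyadics" "r \<in> dyadics" shows "max 0 (q - r) \<in> dyadics"
proof (cases "r \<le> q")
  case True
  from assms obtain n m where n: "q * 2 ^ n \<in> \<int>" and m: "r * 2 ^ m \<in> \<int>"
    unfolding dyadics_def by auto
  have "(q * 2 ^ n) * 2 ^ m \<in> \<int>" "(r * 2 ^ m) * 2 ^ n \<in> \<int>"
    using n m by (auto intro: Ints_mult)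
  hence "(q - r) * 2 ^ (n + m) \<in> \<int>"
    by (simp add: algebra_simps power_add Ints_diff)
  thus ?thesis using True unfolding dyadics_def by auto
next
  case False
  thus ?thesis unfolding dyadics_def by (auto intro: exI[of _ 0])
qed

instantiation dyadic :: minus
begin
lift_definition minus_dyadic :: "dyadic \<Rightarrow> dyadic \<Rightarrow> dyadic" is "\<lambda>q r. max 0 (q - r)"
  by (rule dyadics_diff)
instance ..
end

instance dyadic :: ordered_cancel_comm_monoid_add
proof
  fix a b c :: dyadic
  show "a \<le> b \<Longrightarrow> c + a \<le> c + b" by transfer simp
  show "a + b - a = b" by transfer (auto simp: dyadics_def)
  show "a - b - c = a - (b + c)" by transfer (auto simp: dyadics_def)
qed

text \<open>The monoid algebra \<open>\<rat>[M_{1/2}]\<close>: finitely supported functions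
  \<open>M_{1/2} \<rightarrow> \<rat>\<close> with convolution product, i.e. \<open>\<Sum> c_i x^{m_i}\<close>.\<close>

type_synonym QM = "dyadic \<Rightarrow>\<^sub>0 rat"

definition principal_ideal :: "QM \<Rightarrow> QM set" where
  "principal_ideal a = {a * r | r. True}"

text \<open>Irreducible (atom) element of a commutative monoid with zero; this is literally the
  definition of \<open>irreducible\<close> in HOL-Computational_Algebra.Factorial_Ring, which cannot be
  used directly since it lives in class \<open>algebraic_semidom\<close> (requires a division operation).\<close>

definition irred :: "'a :: comm_semiring_1 \<Rightarrow> bool" where
  "irred p \<longleftrightarrow> p \<noteq> 0 \<and> \<not> p dvd 1 \<and> (\<forall>a b. p = a * b \<longrightarrow> a dvd 1 \<or> b dvd 1)"

end

theory Submission
  imports Defs "HOL-Computational_Algebra.Polynomial_Factorial" "HOL-Computational_Algebra.Field_as_Ring"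
begin


definition ej :: "nat \<Rightarrow> nat \<Rightarrow> dyadic" where
  "ej j i = Abs_dyadic (of_nat i / 2 ^ j)"

lemma ej_mem: "(of_nat i / 2 ^ j :: rat) \<in> dyadics"
  unfolding dyadics_def by (auto intro!: exI[of _ j])

lemma rep_ej: "rep_dyadic (ej j i) = of_nat i / 2 ^ j"
  unfolding ej_def by (rule Abs_dyadic_inverse[OF ej_mem])

lemma ej_add: "ej j (i + k) = ej j i + ej j k"
  by (simp add: rep_dyadic_inject[symmetric] plus_dyadic.rep_eq rep_ej add_divide_distrib)

lemma ej_0 [simp]: "ej j 0 = 0"
  by (simp add: rep_dyadic_inject[symmetric] zero_dyadic.rep_eq rep_ej)

lemma ej_inj [simp]: "ej j i = ej j k \<longleftrightarrow> i = k"
  by (simp add: rep_dyadic_inject[symmetric] rep_ej)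

lemma ej_shift: "ej j i = ej (j + m) (i * 2 ^ m)"
  by (simp add: rep_dyadic_inject[symmetric] rep_ej power_add)

lemma range_ej_mono: "d \<in> range (ej j) \<Longrightarrow> j \<le> j' \<Longrightarrow> d \<in> range (ej j')"
proof -
  assume "d \<in> range (ej j)" "j \<le> j'"
  then obtain i where "d = ej j i" by auto
  moreover obtain m where "j' = j + m" using \<open>j \<le> j'\<close> le_Suc_ex by blast
  ultimately show ?thesis using ej_shift by auto
qed

lemma ex_ej: "\<exists>j. d \<in> range (ej j)"
proof -
  have "rep_dyadic d \<in> dyadics" by (rule rep_dyadic)
  then obtain n where n: "rep_dyadic d * 2 ^ n \<in> \<int>" and nn: "0 \<le> rep_dyadic d"
    unfolding dyadics_def by auto
  then obtain k where k: "rep_dyadic d * 2 ^ n = of_int k" by (auto elim: Ints_cases)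
  have "0 \<le> k" using nn k
    by (metis of_int_0_le_iff zero_le_numeral zero_le_power mult_nonneg_nonneg)
  hence "rep_dyadic d = of_nat (nat k) / 2 ^ n" using k by (simp add: field_simps)
  hence "d = ej n (nat k)" by (simp add: rep_dyadic_inject[symmetric] rep_ej)
  thus ?thesis by blast
qed

lemma ex_ej_finite: "finite K \<Longrightarrow> \<exists>j. K \<subseteq> range (ej j)"
proof (induction K rule: finite_induct)
  case empty then show ?case by simp
next
  case (insert d K)
  then obtain j where j: "K \<subseteq> range (ej j)" by blast
  obtain j' where j': "d \<in> range (ej j')" using ex_ej by blast
  have "K \<subseteq> range (ej (max j j'))" using j range_ej_mono[of _ j "max j j'"] by auto
  moreover have "d \<in> range (ej (max j j'))" using j' range_ej_mono[of d j' "max j j'"] by auto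
  ultimately show ?case by blast
qed

definition S :: "nat \<Rightarrow> QM set" where
  "S j = {a. Poly_Mapping.keys a \<subseteq> range (ej j)}"

lemma S_mono: "a \<in> S j \<Longrightarrow> j \<le> j' \<Longrightarrow> a \<in> S j'"
  unfolding S_def using range_ej_mono by blast

lemma ex_S: "\<exists>j. a \<in> S j"
  unfolding S_def using ex_ej_finite[of "Poly_Mapping.keys a"] by simp

definition th :: "nat \<Rightarrow> rat poly \<Rightarrow> QM" where
  "th j p = (\<Sum>i\<le>degree p. Poly_Mapping.single (ej j i) (coeff p i))"

lemma th_bound: "degree p < n \<Longrightarrow> th j p = (\<Sum>i<n. Poly_Mapping.single (ej j i) (coeff p i))"
  unfolding th_def
  by (rule sum.mono_neutral_left) (auto simp: coeff_eq_0)

lemma lookup_th_ej: "Poly_Mapping.lookup (th j p) (ej j i) = coeff p i"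
proof -
  have "th j p = (\<Sum>k<Suc (max (degree p) i). Poly_Mapping.single (ej j k) (coeff p k))"
    by (rule th_bound) simp
  hence "Poly_Mapping.lookup (th j p) (ej j i) = (\<Sum>k<Suc (max (degree p) i). (coeff p k when ej j k = ej j i))"
    by (simp only: lookup_sum lookup_single)
  also have "\<dots> = (\<Sum>k<Suc (max (degree p) i). (if k = i then coeff p k else 0))"
    by (intro sum.cong) (auto simp: when_def)
  also have "\<dots> = coeff p i" by simp
  finally show ?thesis .
qed

lemma lookup_th_other: "d \<notin> range (ej j) \<Longrightarrow> Poly_Mapping.lookup (th j p) d = 0"
  unfolding th_def by (auto simp: lookup_sum lookup_single when_def intro!: sum.neutral)

lemma th_S: "th j p \<in> S j"
  unfolding S_def using lookup_th_other[of _ j p] by (auto simp: Poly_Mapping.in_keys_iff)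

lemma th_inj: "th j p = th j q \<Longrightarrow> p = q"
  by (rule poly_eqI) (metis lookup_th_ej)

lemma th_add: fixes p q :: "rat poly" shows "th j (p + q) = th j p + th j q"
proof -
  obtain n where n: "degree p < n" "degree q < n" "degree (p + q) < n"
    using degree_add_le_max[of p q]
    by (metis le_imp_less_Suc max.cobounded1 max.cobounded2 order.trans)
  show ?thesis
    by (simp add: th_bound[OF n(1)] th_bound[OF n(2)] th_bound[OF n(3)] single_add sum.distrib)
qed

lemma th_0 [simp]: "th j 0 = 0" by (simp add: th_def)

lemma th_const: "th j [:c:] = Poly_Mapping.single 0 c"
  by (simp add: th_def)

lemma th_1 [simp]: "th j 1 = 1"
  by (simp add: th_def)

lemma th_smult: "th j (smult c p) = Poly_Mapping.single 0 c * th j p"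
proof -
  obtain n where n: "degree p < n" "degree (smult c p) < n"
    using degree_smult_le[of c p] by (metis le_imp_less_Suc lessI)
  show ?thesis
    by (simp only: th_bound[OF n(1)] th_bound[OF n(2)] sum_distrib_left mult_single coeff_smult add_0)
qed

lemma th_pCons0: "th j (pCons 0 p) = Poly_Mapping.single (ej j 1) 1 * th j p"
proof -
  obtain n where n: "degree p < n" "degree (pCons 0 p) < Suc n"
    using degree_pCons_le[of 0 p] by (metis Suc_less_eq le_imp_less_Suc lessI)
  have "th j (pCons 0 p) = (\<Sum>i<Suc n. Poly_Mapping.single (ej j i) (coeff (pCons 0 p) i))"
    by (rule th_bound[OF n(2)])
  also have "\<dots> = (\<Sum>i<n. Poly_Mapping.single (ej j (Suc i)) (coeff p i))"
    by (simp only: sum.lessThan_Suc_shift coeff_pCons_0 coeff_pCons_Suc single_zero add_0)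
  also have "\<dots> = Poly_Mapping.single (ej j 1) 1 * th j p"
    by (simp add: th_bound[OF n(1)] sum_distrib_left mult_single ej_add[symmetric])
  finally show ?thesis .
qed

lemma th_mult: "th j (p * q) = th j p * th j q"
proof (induction p)
  case 0 then show ?case by simp
next
  case (pCons a p)
  have "pCons a p = [:a:] + pCons 0 p" by simp
  hence "th j (pCons a p) = Poly_Mapping.single 0 a + Poly_Mapping.single (ej j 1) 1 * th j p"
    by (metis th_add th_const th_pCons0)
  moreover have "th j (pCons a p * q) = Poly_Mapping.single 0 a * th j q + Poly_Mapping.single (ej j 1) 1 * (th j p * th j q)"
    by (simp add: th_add th_smult th_pCons0 pCons.IH)
  ultimately show ?case by (simp add: algebra_simps)
qed



lemma th_surj: assumes "a \<in> S j" shows "\<exists>p. a = th j p"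
proof -
  define f where "f i = Poly_Mapping.lookup a (ej j i)" for i
  have "{i. f i \<noteq> 0} = ej j -` Poly_Mapping.keys a"
    by (auto simp: f_def Poly_Mapping.in_keys_iff)
  moreover have "finite (ej j -` Poly_Mapping.keys a)"
    by (rule finite_vimageI) (auto simp: inj_on_def)
  ultimately have fin: "finite {i. f i \<noteq> 0}" by simp
  then obtain n where n: "\<And>i. f i \<noteq> 0 \<Longrightarrow> i \<le> n"
    using finite_nat_set_iff_bounded_le by auto
  have cf: "coeff (Abs_poly f) = f"
    by (rule coeff_Abs_poly[of n]) (use n in force)
  have "a = th j (Abs_poly f)"
  proof (rule poly_mapping_eqI)
    fix d
    show "Poly_Mapping.lookup a d = Poly_Mapping.lookup (th j (Abs_poly f)) d"
    proof (cases "d \<in> range (ej j)")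
      case True
      then obtain i where "d = ej j i" by auto
      thus ?thesis by (simp add: lookup_th_ej cf f_def)
    next
      case False
      hence "d \<notin> Poly_Mapping.keys a" using assms unfolding S_def by auto
      thus ?thesis using False lookup_th_other by (simp add: Poly_Mapping.in_keys_iff)
    qed
  qed
  thus ?thesis by blast
qed

lemma ex_S_fin: "finite A \<Longrightarrow> \<exists>j. \<forall>a\<in>A. a \<in> S j"
proof (induction A rule: finite_induct)
  case empty then show ?case by simp
next
  case (insert x A)
  then obtain j where j: "\<forall>a\<in>A. a \<in> S j" by blast
  obtain j' where j': "x \<in> S j'" using ex_S by blast
  show ?case using j j' S_mono[of _ j "max j j'"] S_mono[of x j' "max j j'"]
    by (intro exI[of _ "max j j'"]) auto
qed

lemma unit_const: fixes u :: QM assumes "u dvd 1" shows "\<exists>c. c \<noteq> 0 \<and> u = Poly_Mapping.single 0 c"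
proof -
  obtain v where uv: "1 = u * v" using assms by (elim dvdE)
  have fin: "finite {u, v}" by simp
  obtain J where J0: "\<forall>a\<in>{u, v}. a \<in> S J" using ex_S_fin[OF fin] by blast
  have J: "u \<in> S J" "v \<in> S J" using J0 by simp_all
  obtain p where p1: "u = th J p" using th_surj[OF J(1)] by blast
  obtain q where q1: "v = th J q" using th_surj[OF J(2)] by blast
  have "th J (p * q) = th J p * th J q" by (rule th_mult)
  also have "\<dots> = u * v" using p1 q1 by simp
  also have "\<dots> = th J 1" using uv by simp
  finally have "p * q = 1" by (rule th_inj)
  hence pu: "p dvd 1" by (rule dvdI[OF sym])
  hence pnz: "p \<noteq> 0" by (metis not_is_unit_0)
  hence dp: "degree p = 0" using pu is_unit_iff_degree by blast
  hence pc: "[:coeff p 0:] = p" by (rule degree_0_id)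
  have c0: "coeff p 0 \<noteq> 0" using pnz dp leading_coeff_0_iff by metis
  have "u = th J [:coeff p 0:]" using p1 pc by simp
  also have "\<dots> = Poly_Mapping.single 0 (coeff p 0)" by (rule th_const)
  finally show ?thesis using c0 by blast
qed

lemma th_unit: assumes "th j p dvd 1" shows "p dvd 1"
proof -
  obtain c where c: "c \<noteq> 0" "th j p = Poly_Mapping.single 0 c" using unit_const[OF assms] by blast
  have "th j p = th j [:c:]" using c(2) th_const[of j c] by simp
  hence "p = [:c:]" by (rule th_inj)
  moreover have "c dvd 1" using c(1) by (intro dvdI[of _ _ "inverse c"]) simp
  ultimately show ?thesis by (simp add: is_unit_const_poly_iff)
qed

lemma th_dvd: assumes "p dvd q" shows "th j p dvd th j q"
proof -
  obtain k where "q = p * k" using assms by (elim dvdE)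
  hence "th j q = th j p * th j k" by (simp add: th_mult)
  thus ?thesis by (rule dvdI)
qed

lemma irred_th: assumes "irred (th j p)" shows "irreducible p"
proof (rule irreducibleI)
  have i: "th j p \<noteq> 0" "\<not> th j p dvd 1"
    "\<And>a b. th j p = a * b \<Longrightarrow> a dvd 1 \<or> b dvd 1"
    using assms unfolding irred_def by blast+
  show "p \<noteq> 0" using i(1) by (metis th_0)
  show "\<not> p dvd 1"
  proof
    assume "p dvd 1"
    hence "th j p dvd th j 1" by (rule th_dvd)
    thus False using i(2) by simp
  qed
  fix a b assume "p = a * b"
  hence "th j p = th j a * th j b" by (simp add: th_mult)
  hence "th j a dvd 1 \<or> th j b dvd 1" by (rule i(3))
  thus "a dvd 1 \<or> b dvd 1" using th_unit by blast
qed

lemma irred_prime: fixes a b c :: QM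
  assumes "irred a" "a dvd b * c" shows "a dvd b \<or> a dvd c"
proof -
  obtain q where q: "b * c = a * q" using assms(2) by (elim dvdE)
  have fin: "finite {a, b, c, q}" by simp
  obtain J where J0: "\<forall>x\<in>{a, b, c, q}. x \<in> S J" using ex_S_fin[OF fin] by blast
  have J: "a \<in> S J" "b \<in> S J" "c \<in> S J" "q \<in> S J" using J0 by simp_all
  obtain pa where pa: "a = th J pa" using th_surj[OF J(1)] by blast
  obtain pb where pb: "b = th J pb" using th_surj[OF J(2)] by blast
  obtain pc where pc: "c = th J pc" using th_surj[OF J(3)] by blast
  obtain pq where pq: "q = th J pq" using th_surj[OF J(4)] by blast
  have "th J (pb * pc) = b * c" unfolding pb pc by (rule th_mult)
  also have "\<dots> = a * q" by (rule q)
  also have "\<dots> = th J (pa * pq)" unfolding pa pq by (rule th_mult[symmetric])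
  finally have "pb * pc = pa * pq" by (rule th_inj)
  hence d: "pa dvd pb * pc" by (rule dvdI)
  have "irred (th J pa)" using assms(1) unfolding pa .
  hence "irreducible pa" by (rule irred_th)
  hence "prime_elem pa" by (rule irreducible_imp_prime_elem_gcd)
  hence "pa dvd pb \<or> pa dvd pc" using d by (rule prime_elem_dvd_multD)
  thus ?thesis
  proof
    assume "pa dvd pb" hence "th J pa dvd th J pb" by (rule th_dvd)
    hence "a dvd b" unfolding pa pb .
    thus ?thesis by (rule disjI1)
  next
    assume "pa dvd pc" hence "th J pa dvd th J pc" by (rule th_dvd)
    hence "a dvd c" unfolding pa pc .
    thus ?thesis by (rule disjI2)
  qed
qed




lemma pi_sub: "principal_ideal (a::QM) \<subseteq> principal_ideal b \<longleftrightarrow> b dvd a"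
proof
  assume "principal_ideal a \<subseteq> principal_ideal b"
  moreover have "a \<in> principal_ideal a" unfolding principal_ideal_def by (auto intro: exI[of _ 1])
  ultimately have "a \<in> principal_ideal b" by blast
  then obtain r where "a = b * r" unfolding principal_ideal_def by blast
  thus "b dvd a" by (rule dvdI)
next
  assume "b dvd a"
  then obtain k where "a = b * k" by (elim dvdE)
  thus "principal_ideal a \<subseteq> principal_ideal b" unfolding principal_ideal_def
    by (auto intro: exI[of _ "k * r" for r] simp: mult.assoc)
qed

lemma pi_eq: "principal_ideal (a::QM) = principal_ideal b \<longleftrightarrow> b dvd a \<and> a dvd b"
  by (metis pi_sub subset_antisym order_refl)

definition cls :: "QM \<Rightarrow> QM set" where
  "cls d = {e. e dvd d \<and> d dvd e}"

lemma cls_eq: "d dvd e \<Longrightarrow> e dvd d \<Longrightarrow> cls d = cls e"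
  unfolding cls_def by (auto intro: dvd_trans)

lemma self_cls: "d \<in> cls d" unfolding cls_def by simp

lemma in_cls: "e \<in> cls d \<Longrightarrow> e dvd d \<and> d dvd e" unfolding cls_def by simp

lemma div_sub:
  fixes xs :: "QM list"
  assumes "\<forall>x\<in>set xs. x \<noteq> 0 \<and> (\<forall>b c. x dvd b * c \<longrightarrow> x dvd b \<or> x dvd c)"
    and "d dvd prod_list xs"
  shows "\<exists>ys. set ys \<subseteq> set xs \<and> length ys \<le> length xs \<and> d dvd prod_list ys \<and> prod_list ys dvd d"
  using assms
proof (induction xs arbitrary: d)
  case Nil
  then show ?case by (intro exI[of _ "[]"]) auto
next
  case (Cons x xs)
  have x: "x \<noteq> 0" "\<And>b c. x dvd b * c \<Longrightarrow> x dvd b \<or> x dvd c" using Cons.prems(1) by auto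
  have hyp: "\<forall>x\<in>set xs. x \<noteq> 0 \<and> (\<forall>b c. x dvd b * c \<longrightarrow> x dvd b \<or> x dvd c)"
    using Cons.prems(1) by auto
  show ?case
  proof (cases "x dvd d")
    case True
    then obtain d' where d': "d = x * d'" by (elim dvdE)
    have "x * d' dvd x * prod_list xs" using Cons.prems(2) d' by simp
    hence "d' dvd prod_list xs" using x(1) by simp
    then obtain ys where ys: "set ys \<subseteq> set xs" "length ys \<le> length xs"
      "d' dvd prod_list ys" "prod_list ys dvd d'" using Cons.IH[OF hyp] by blast
    show ?thesis
      by (rule exI[of _ "x # ys"]) (use ys d' in \<open>auto intro: mult_dvd_mono\<close>)
  next
    case False
    obtain e where e: "x * prod_list xs = d * e" using Cons.prems(2) by (auto elim: dvdE)
    hence "x dvd d * e" by (metis dvd_triv_left)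
    hence "x dvd e" using x(2) False by blast
    then obtain e' where e': "e = x * e'" by (elim dvdE)
    have "x * prod_list xs = x * (d * e')" using e e' by (simp add: ac_simps)
    hence "prod_list xs = d * e'" using x(1) by simp
    hence "d dvd prod_list xs" by simp
    then obtain ys where ys: "set ys \<subseteq> set xs" "length ys \<le> length xs"
      "d dvd prod_list ys" "prod_list ys dvd d" using Cons.IH[OF hyp] by blast
    show ?thesis by (rule exI[of _ ys]) (use ys in auto)
  qed
qed

lemma finite_classes:
  fixes xs :: "QM list"
  assumes "\<forall>x\<in>set xs. x \<noteq> 0 \<and> (\<forall>b c. x dvd b * c \<longrightarrow> x dvd b \<or> x dvd c)"
    and "P dvd prod_list xs"
  shows "finite (cls ` {d. d dvd P})"
proof -
  let ?L = "{ys. set ys \<subseteq> set xs \<and> length ys \<le> length xs}"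
  have "cls ` {d. d dvd P} \<subseteq> (\<lambda>ys. cls (prod_list ys)) ` ?L"
  proof
    fix c assume "c \<in> cls ` {d. d dvd P}"
    then obtain d where d: "d dvd P" "c = cls d" by auto
    have "d dvd prod_list xs" using d(1) assms(2) dvd_trans by blast
    then obtain ys where "set ys \<subseteq> set xs" "length ys \<le> length xs"
      "d dvd prod_list ys" "prod_list ys dvd d" using div_sub[OF assms(1)] by blast
    thus "c \<in> (\<lambda>ys. cls (prod_list ys)) ` ?L" using d cls_eq by blast
  qed
  moreover have "finite ?L" by (rule finite_lists_length_le) simp
  ultimately show ?thesis by (meson finite_surj)
qed

lemma a_imp_b:
  fixes P :: "QM"
  assumes fin: "finite (cls ` {d. d dvd P})"
    and g0: "g 0 = P" and mono: "\<forall>n. principal_ideal (g n) \<subseteq> principal_ideal (g (Suc n))"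
  shows "\<exists>N. \<forall>n\<ge>N. principal_ideal (g n) = principal_ideal (g N)"
proof -
  have gstep: "g (Suc n) dvd g n" for n using mono pi_sub by blast
  have le: "g m dvd g n" if "n \<le> m" for n m
    using that
  proof (induction m rule: dec_induct)
    case base then show ?case by simp
  next
    case (step m) then show ?case using gstep[of m] dvd_trans by blast
  qed
  define D where "D n = cls ` {d. d dvd g n}" for n
  have Dsub: "D m \<subseteq> D n" if "n \<le> m" for n m
    unfolding D_def using le[OF that] dvd_trans by blast
  have DF: "D n \<subseteq> cls ` {d. d dvd P}" for n using Dsub[of 0 n] g0 unfolding D_def by simp
  have finD: "finite (D n)" for n using DF fin finite_subset by blast
  define k where "k = (LEAST k. \<exists>n. card (D n) = k)"
  obtain N where N: "card (D N) = k" using LeastI_ex[of "\<lambda>k. \<exists>n. card (D n) = k"] unfolding k_def by blast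
  have kmin: "k \<le> card (D n)" for n unfolding k_def by (rule Least_le) blast
  show ?thesis
  proof (intro exI allI impI)
    fix n assume "N \<le> n"
    hence "D n \<subseteq> D N" by (rule Dsub)
    moreover have "card (D N) \<le> card (D n)" using N kmin by simp
    ultimately have "D n = D N" using finD
      by (metis card_seteq)
    hence "cls (g N) \<in> D n" unfolding D_def by auto
    then obtain d where d: "d dvd g n" "cls (g N) = cls d" unfolding D_def by auto
    hence "g N dvd d" using self_cls[of "g N"] in_cls by metis
    hence "g N dvd g n" using d(1) dvd_trans by blast
    thus "principal_ideal (g n) = principal_ideal (g N)" using le[OF \<open>N \<le> n\<close>] pi_eq by blast
  qed
qed

definition atomic :: "QM \<Rightarrow> bool" where
  "atomic P \<longleftrightarrow> P dvd 1 \<or> (\<exists>xs. xs \<noteq> [] \<and> (\<forall>x\<in>set xs. irred x) \<and> P = prod_list xs)"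

lemma irred_unit_mult:
  fixes x u :: "QM"
  assumes "irred x" "u dvd 1" shows "irred (u * x)"
proof -
  obtain v where v: "1 = u * v" using assms(2) by (elim dvdE)
  have "u \<noteq> 0" using v by auto
  have "u * x \<noteq> 0" using assms(1) \<open>u \<noteq> 0\<close> unfolding irred_def by simp
  moreover have "\<not> u * x dvd 1" using assms(1) unfolding irred_def using dvd_mult_right by blast
  moreover have "a dvd 1 \<or> b dvd 1" if ab: "u * x = a * b" for a b
  proof -
    have "x = (v * a) * b" using ab v by (metis mult.assoc mult.commute mult_1_left)
    hence "v * a dvd 1 \<or> b dvd 1" using assms(1) unfolding irred_def by blast
    thus ?thesis using dvd_mult_right by blast
  qed
  ultimately show ?thesis unfolding irred_def by blast
qed

lemma atomic_mult:
  fixes a b :: "QM"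
  assumes "atomic a" "atomic b" shows "atomic (a * b)"
proof -
  have unit_l: "atomic (u * c)" if u1: "u dvd 1" and c1: "atomic c" for u c :: QM
  proof (cases "c dvd 1")
    case True then show ?thesis using mult_dvd_mono[OF u1 True] unfolding atomic_def by simp
  next
    case False
    then obtain y ys where c: "c = prod_list (y # ys)" "\<forall>x\<in>set (y # ys). irred x"
      using c1 unfolding atomic_def by (metis list.exhaust)
    have "u * c = prod_list ((u * y) # ys)" using c by (simp add: mult.assoc)
    moreover have "\<forall>x\<in>set ((u * y) # ys). irred x" using c irred_unit_mult[OF _ u1] by auto
    ultimately show ?thesis unfolding atomic_def by blast
  qed
  show ?thesis
  proof (cases "a dvd 1")
    case True then show ?thesis using unit_l assms by blast
  next
    case a: False
    show ?thesis
    proof (cases "b dvd 1")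
      case True then show ?thesis using unit_l assms by (metis mult.commute)
    next
      case False
      then obtain xs ys where "xs \<noteq> []" "\<forall>x\<in>set xs. irred x" "a = prod_list xs"
        "\<forall>x\<in>set ys. irred x" "b = prod_list ys"
        using a assms unfolding atomic_def by blast
      thus ?thesis unfolding atomic_def
        by (intro disjI2 exI[of _ "xs @ ys"]) auto
    qed
  qed
qed

lemma nonatomic_split:
  fixes x :: "QM"
  assumes "x \<noteq> 0" "\<not> atomic x"
  shows "\<exists>a b. x = a * b \<and> \<not> b dvd 1 \<and> \<not> atomic a"
proof -
  have "\<not> x dvd 1" using assms unfolding atomic_def by auto
  moreover have "\<not> irred x" using assms(2) unfolding atomic_def
    by (metis empty_iff list.distinct(1) list.set(1) list.set_intros(1) prod_list.Cons
        prod_list.Nil mult.right_neutral set_ConsD)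
  ultimately obtain a b where ab: "x = a * b" "\<not> a dvd 1" "\<not> b dvd 1"
    using assms(1) unfolding irred_def by blast
  show ?thesis
  proof (cases "atomic a")
    case True
    hence "\<not> atomic b" using atomic_mult assms(2) ab(1) by blast
    thus ?thesis using ab by (metis mult.commute)
  next
    case False thus ?thesis using ab by blast
  qed
qed

lemma b_imp_c:
  fixes P :: "QM"
  assumes "P \<noteq> 0"
    and acc: "\<forall>g :: nat \<Rightarrow> QM. g 0 = P \<and> (\<forall>n. principal_ideal (g n) \<subseteq> principal_ideal (g (Suc n)))
                 \<longrightarrow> (\<exists>N. \<forall>n\<ge>N. principal_ideal (g n) = principal_ideal (g N))"
  shows "atomic P"
proof (rule ccontr)
  assume na: "\<not> atomic P"
  define f where "f x = (SOME a. \<exists>b. x = a * b \<and> \<not> b dvd 1 \<and> \<not> atomic a)" for x :: QM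
  define g where "g n = (f ^^ n) P" for n
  have fprop: "\<exists>b. x = f x * b \<and> \<not> b dvd 1 \<and> \<not> atomic (f x)" if "x \<noteq> 0" "\<not> atomic x" for x
    unfolding f_def using someI_ex[OF nonatomic_split[OF that]] .
  have gS: "g (Suc n) = f (g n)" for n by (simp add: g_def)
  have inv: "g n \<noteq> 0 \<and> \<not> atomic (g n)" for n
  proof (induction n)
    case 0 then show ?case using assms(1) na by (simp add: g_def)
  next
    case (Suc n)
    obtain b where b: "g n = f (g n) * b" "\<not> atomic (f (g n))" using fprop Suc by blast
    have "f (g n) \<noteq> 0" using b(1) Suc by (metis mult_zero_left)
    thus ?case using b(2) unfolding gS by blast
  qed
  have gs: "\<exists>b. g n = g (Suc n) * b \<and> \<not> b dvd 1" for n
    using fprop[OF conjunct1[OF inv[of n]] conjunct2[OF inv[of n]]] unfolding gS by blast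
  have "\<forall>n. principal_ideal (g n) \<subseteq> principal_ideal (g (Suc n))"
  proof
    fix n
    obtain b where "g n = g (Suc n) * b" using gs[of n] by blast
    hence "g (Suc n) dvd g n" by (rule dvdI)
    thus "principal_ideal (g n) \<subseteq> principal_ideal (g (Suc n))" using pi_sub by blast
  qed
  moreover have "g 0 = P" by (simp add: g_def)
  ultimately have gP: "g 0 = P \<and> (\<forall>n. principal_ideal (g n) \<subseteq> principal_ideal (g (Suc n)))"
    by (rule conjI[rotated])
  have imp: "g 0 = P \<and> (\<forall>n. principal_ideal (g n) \<subseteq> principal_ideal (g (Suc n)))
                 \<longrightarrow> (\<exists>N. \<forall>n\<ge>N. principal_ideal (g n) = principal_ideal (g N))"
    using acc by (rule spec)
  obtain N where N: "\<forall>n\<ge>N. principal_ideal (g n) = principal_ideal (g N)"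
    using mp[OF imp gP] by (elim exE)
  hence "principal_ideal (g (Suc N)) = principal_ideal (g N)" by (rule allE[of _ "Suc N"]) simp
  hence "g N dvd g (Suc N)" using pi_eq[of "g (Suc N)" "g N"] by simp
  then obtain c where c: "g (Suc N) = g N * c" by (elim dvdE)
  obtain b where b: "g N = g (Suc N) * b" "\<not> b dvd 1" using gs by blast
  have "g N * 1 = g N * (c * b)" using b(1) c by (metis mult.assoc mult_1_right)
  moreover have "g N \<noteq> 0" using inv[of N] by blast
  ultimately have "1 = c * b" using mult_left_cancel by blast
  hence "c * b = 1" by simp
  hence "b dvd 1" by (metis dvdI mult.commute)
  thus False using b by blast
qed


theorem corollary4p3:
  fixes P :: QM
  assumes "P \<noteq> 0"
  shows "(finite ((\<lambda>d. {e. e dvd d \<and> d dvd e}) ` {d. d dvd P})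
          \<longleftrightarrow> (\<forall>g :: nat \<Rightarrow> QM. g 0 = P \<and> (\<forall>n. principal_ideal (g n) \<subseteq> principal_ideal (g (Suc n)))
                 \<longrightarrow> (\<exists>N. \<forall>n\<ge>N. principal_ideal (g n) = principal_ideal (g N))))
       \<and> ((\<forall>g :: nat \<Rightarrow> QM. g 0 = P \<and> (\<forall>n. principal_ideal (g n) \<subseteq> principal_ideal (g (Suc n)))
                 \<longrightarrow> (\<exists>N. \<forall>n\<ge>N. principal_ideal (g n) = principal_ideal (g N)))
          \<longleftrightarrow> (P dvd 1 \<or> (\<exists>xs. xs \<noteq> [] \<and> (\<forall>x\<in>set xs. irred x) \<and> P = prod_list xs)))"
proof -
  have ce: "(\<lambda>d. {e. e dvd d \<and> d dvd e}) = (cls :: QM \<Rightarrow> QM set)"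
    by (simp add: cls_def fun_eq_iff)
  let ?B = "\<forall>g :: nat \<Rightarrow> QM. g 0 = P \<and> (\<forall>n. principal_ideal (g n) \<subseteq> principal_ideal (g (Suc n)))
                 \<longrightarrow> (\<exists>N. \<forall>n\<ge>N. principal_ideal (g n) = principal_ideal (g N))"
  have ab: "?B" if fin: "finite (cls ` {d. d dvd P})"
  proof (intro allI impI)
    fix g :: "nat \<Rightarrow> QM"
    assume h: "g 0 = P \<and> (\<forall>n. principal_ideal (g n) \<subseteq> principal_ideal (g (Suc n)))"
    show "\<exists>N. \<forall>n\<ge>N. principal_ideal (g n) = principal_ideal (g N)"
      by (rule a_imp_b[OF fin conjunct1[OF h] conjunct2[OF h]])
  qed
  have bc: "atomic P" if "?B" using b_imp_c[OF assms that] .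
  have ca: "finite (cls ` {d. d dvd P})" if at: "atomic P"
  proof (cases "P dvd 1")
    case True
    have "P dvd prod_list []" using True by simp
    thus ?thesis by (rule finite_classes[rotated]) simp
  next
    case False
    then obtain xs where xs: "\<forall>x\<in>set xs. irred x" "P = prod_list xs"
      using at unfolding atomic_def by blast
    have "\<forall>x\<in>set xs. x \<noteq> 0 \<and> (\<forall>b c. x dvd b * c \<longrightarrow> x dvd b \<or> x dvd c)"
    proof
      fix x assume "x \<in> set xs"
      hence ix: "irred x" using xs(1) by blast
      hence "x \<noteq> 0" unfolding irred_def by blast
      thus "x \<noteq> 0 \<and> (\<forall>b c. x dvd b * c \<longrightarrow> x dvd b \<or> x dvd c)"
        using irred_prime[OF ix] by blast
    qed
    moreover have "P dvd prod_list xs" unfolding xs(2)[symmetric] by (rule dvd_refl)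
    ultimately show ?thesis by (rule finite_classes)
  qed
  have e1: "finite (cls ` {d. d dvd P}) \<longleftrightarrow> ?B"
  proof
    assume "finite (cls ` {d. d dvd P})" thus ?B by (rule ab)
  next
    assume b: ?B show "finite (cls ` {d. d dvd P})" by (rule ca[OF bc[OF b]])
  qed
  have e2: "?B \<longleftrightarrow> atomic P"
  proof
    assume ?B thus "atomic P" by (rule bc)
  next
    assume a: "atomic P" show ?B by (rule ab[OF ca[OF a]])
  qed
  show ?thesis using e1 e2 unfolding ce atomic_def by (rule conjI)
qed

end
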